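(* Let $D$ be an integer which is not a perfect square, let $A,B\in\mathbb{Z}$, and let $p\neq 2$ be a prime with $p\mid D$ and $p^2\nmid D$. Let $l\geq 1$ be an integer such that $p^{l+1}$ divides none of $A$, $B$, $A-B$, $G(A,B)$, where $G(A,B)=A^2-2AB+B^2-2A-2B+1$. Suppose $\mathbf{t}=(t_0,\ldots,t_4)\in(\mathbb{Z}/p^{8l+1}\mathbb{Z})^5$ has components not all divisible by $p$ and satisfies $Q_1(\mathbf{t})\equiv Q_2(\mathbf{t})\equiv 0\pmod{p^{8l+1}}$. Then $p^{4l+1}$ does not divide all $2\times 2$ minors of the Jacobian matrix of $(Q_1,Q_2)$ at $\mathbf{t}$.
   Context: $Q_1(\mathbf{t})=t_2^2-Dt_3^2-t_0t_1$ and $Q_2(\mathbf{t})=t_2^2-Dt_4^2-(t_0+At_1)(t_0+Bt_1)$. The Jacobian matrix at $\mathbf{t}$ is $\begin{pmatrix} t_1 & t_0 & -2t_2 & 2Dt_3 & 0\\ 2t_0+(A+B)t_1 & (A+B)t_0+2ABt_1 & -2t_2 & 0 & 2Dt_4\end{pmatrix}$ (up to sign conventions, the minors are those of the matrix of partial derivatives). *)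

theory Defs
  imports "HOL-Computational_Algebra.Primes"
begin

text \<open>Points t = (t_0,...,t_4) are represented by t :: nat => int, using only t 0, ..., t 4.\<close>

definition Q1 :: "int \<Rightarrow> (nat \<Rightarrow> int) \<Rightarrow> int" where
  "Q1 D t = (t 2)^2 - D * (t 3)^2 - t 0 * t 1"

definition Q2 :: "int \<Rightarrow> int \<Rightarrow> int \<Rightarrow> (nat \<Rightarrow> int) \<Rightarrow> int" where
  "Q2 D A B t = (t 2)^2 - D * (t 4)^2 - (t 0 + A * t 1) * (t 0 + B * t 1)"

definition G :: "int \<Rightarrow> int \<Rightarrow> int" where
  "G A B = A^2 - 2*A*B + B^2 - 2*A - 2*B + 1"

text \<open>Jacobian matrix (row r in {0,1}, column c in {0..4}), as given in the paper
  (the negative of the matrix of partial derivatives; minors agree up to sign).\<close>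
definition jac :: "int \<Rightarrow> int \<Rightarrow> int \<Rightarrow> (nat \<Rightarrow> int) \<Rightarrow> nat \<Rightarrow> nat \<Rightarrow> int" where
  "jac D A B t r c =
    (if r = 0 then
       (if c = 0 then t 1 else if c = 1 then t 0 else if c = 2 then -2 * t 2
        else if c = 3 then 2 * D * t 3 else 0)
     else
       (if c = 0 then 2 * t 0 + (A + B) * t 1
        else if c = 1 then (A + B) * t 0 + 2 * A * B * t 1
        else if c = 2 then -2 * t 2 else if c = 3 then 0 else 2 * D * t 4))"

definition jac_minor :: "int \<Rightarrow> int \<Rightarrow> int \<Rightarrow> (nat \<Rightarrow> int) \<Rightarrow> nat \<Rightarrow> nat \<Rightarrow> int" where
  "jac_minor D A B t i j = jac D A B t 0 i * jac D A B t 1 j - jac D A B t 0 j * jac D A B t 1 i"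

end

theory Submission
  imports Defs
begin

lemma L1:
  fixes p x y :: int
  assumes "prime p" "p^(a+b) dvd x * y" "\<not> p^(b+1) dvd y"
  shows "p^a dvd x"
proof (cases "x = 0")
  case True thus ?thesis by simp
next
  case False
  have y0: "y \<noteq> 0" using assms(3) by auto
  have pe: "prime_elem p" using assms(1) by (rule prime_imp_prime_elem)
  have nu: "\<not> is_unit p" using pe by (rule prime_elem_not_unit)
  have xy: "x * y \<noteq> 0" using False y0 by simp
  have "a + b \<le> multiplicity p (x*y)"
    using assms(2) power_dvd_iff_le_multiplicity[OF xy nu] by simp
  moreover have "multiplicity p (x*y) = multiplicity p x + multiplicity p y"
    using prime_elem_multiplicity_mult_distrib[OF pe False y0] .
  moreover have "\<not> b + 1 \<le> multiplicity p y"
  proof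
    assume "b + 1 \<le> multiplicity p y"
    hence "p^(b+1) dvd y" using power_dvd_iff_le_multiplicity[OF y0 nu] by blast
    with assms(3) show False by blast
  qed
  ultimately have "a \<le> multiplicity p x" by simp
  thus ?thesis using power_dvd_iff_le_multiplicity[OF False nu] by simp
qed

lemma L2:
  fixes p x y :: int
  assumes "prime p" "p^a dvd x * y" "\<not> p dvd y"
  shows "p^a dvd x"
  using L1[of p a 0 x y] assms by simp

lemma pD:
  fixes p x D :: int
  assumes "prime p" "\<not> p^2 dvd D" "p^(1+1) dvd x^2 * D"
  shows "p dvd x"
proof -
  have "p^1 dvd x^2" by (rule L1[of p 1 1 "x^2" D]) (use assms in \<open>auto simp only: one_add_one\<close>)
  thus ?thesis using assms(1) prime_dvd_power by auto
qed

theorem lemma2p2: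
  fixes D A B p :: int and l :: nat and t :: "nat \<Rightarrow> int"
  assumes "\<not> (\<exists>k::int. D = k^2)"
    and "prime p" and "p \<noteq> 2" and "p dvd D" and "\<not> p^2 dvd D"
    and "l \<ge> 1"
    and "\<not> p^(l+1) dvd A" and "\<not> p^(l+1) dvd B" and "\<not> p^(l+1) dvd (A - B)"
    and "\<not> p^(l+1) dvd G A B"
    and "\<exists>i<5. \<not> p dvd t i"
    and "p^(8*l+1) dvd Q1 D t" and "p^(8*l+1) dvd Q2 D A B t"
  shows "\<not> (\<forall>i j. i < j \<and> j < 5 \<longrightarrow> p^(4*l+1) dvd jac_minor D A B t i j)"
proof
  assume H: "\<forall>i j. i < j \<and> j < 5 \<longrightarrow> p^(4*l+1) dvd jac_minor D A B t i j"
  note pr = assms(2)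
  have p2: "\<not> p dvd 2"
  proof
    assume "p dvd 2"
    hence "p \<le> 2" by (simp add: zdvd_imp_le)
    moreover have "p \<ge> 2" using pr by (simp add: prime_ge_2_int)
    ultimately show False using assms(3) by simp
  qed
  have pp: "p dvd p^(8*l+1)" by simp
  have Q1p: "p dvd Q1 D t" using dvd_trans[OF pp assms(12)] .
  have Q2p: "p dvd Q2 D A B t" using dvd_trans[OF pp assms(13)] .
  have pp2: "p^2 dvd p^(8*l+1)" using assms(6) by (intro le_imp_power_dvd) simp
  have Q1p2: "p^2 dvd Q1 D t" using dvd_trans[OF pp2 assms(12)] .
  have Q2p2: "p^2 dvd Q2 D A B t" using dvd_trans[OF pp2 assms(13)] .
  have pD2: "p^(1+1) dvd t 3 ^ 2 * D \<Longrightarrow> p dvd t 3" 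
    using pD[OF pr assms(5)] by simp
  have pD4: "p^(1+1) dvd t 4 ^ 2 * D \<Longrightarrow> p dvd t 4" 
    using pD[OF pr assms(5)] by simp
  have unit01: "\<not> p dvd t 0 \<or> \<not> p dvd t 1"
  proof (rule ccontr)
    assume "\<not> (\<not> p dvd t 0 \<or> \<not> p dvd t 1)"
    hence d0: "p dvd t 0" and d1: "p dvd t 1" by auto
    have "t 2 ^ 2 = Q1 D t + D * t 3 ^ 2 + t 0 * t 1" by (simp add: Q1_def)
    moreover have "p dvd Q1 D t + D * t 3 ^ 2 + t 0 * t 1"
      using Q1p assms(4) d0 by simp
    ultimately have "p dvd t 2 ^ 2" by simp
    hence d2: "p dvd t 2" using pr by (simp add: prime_dvd_power_iff)
    have e2: "p^2 dvd t 2 ^ 2" using d2 by (rule dvd_power_same)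
    have e01: "p^2 dvd t 0 * t 1" using d0 d1 by (simp add: power2_eq_square mult_dvd_mono)
    have e0A: "p^2 dvd (t 0 + A * t 1) * (t 0 + B * t 1)" using d0 d1 by (simp add: power2_eq_square mult_dvd_mono)
    have eq3: "t 3 ^ 2 * D = t 2 ^ 2 - t 0 * t 1 - Q1 D t" by (simp add: Q1_def)
    have "p^(1+1) dvd t 3 ^ 2 * D" unfolding eq3 one_add_one by (intro dvd_diff e2 e01 Q1p2)
    hence d3: "p dvd t 3" by (rule pD2)
    have eq4: "t 4 ^ 2 * D = t 2 ^ 2 - (t 0 + A * t 1) * (t 0 + B * t 1) - Q2 D A B t" by (simp add: Q2_def)
    have "p^(1+1) dvd t 4 ^ 2 * D" unfolding eq4 one_add_one by (intro dvd_diff e2 e0A Q2p2)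
    hence d4: "p dvd t 4" by (rule pD4)
    obtain i where "i < 5" "\<not> p dvd t i" using assms(11) by blast
    thus False using d0 d1 d2 d3 d4 by (auto simp: less_Suc_eq numeral_eq_Suc)
  qed
  have M01: "p^(4*l+1) dvd 2*A*B*t 1^2 - 2*t 0^2"
  proof -
    have "jac_minor D A B t 0 1 = 2*A*B*t 1^2 - 2*t 0^2" by (simp add: jac_minor_def jac_def power2_eq_square algebra_simps)
    thus ?thesis using H[rule_format, of 0 1] by simp
  qed
  define c where "c = A + B - 1"
  have M02: "p^(4*l+1) dvd 2 * t 2 * (2 * t 0 + c * t 1)"
  proof -
    have "jac_minor D A B t 0 2 = 2 * t 2 * (2 * t 0 + c * t 1)" by (simp add: jac_minor_def jac_def c_def algebra_simps)
    thus ?thesis using H[rule_format, of 0 2] by simp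
  qed
  have M12: "p^(4*l+1) dvd 2 * t 2 * (c * t 0 + 2*A*B * t 1)"
  proof -
    have "jac_minor D A B t 1 2 = 2 * t 2 * (c * t 0 + 2*A*B * t 1)" by (simp add: jac_minor_def jac_def c_def algebra_simps)
    thus ?thesis using H[rule_format, of 1 2] by simp
  qed
  have M03: "p^(4*l+1) dvd 2 * D * t 3 * (2 * t 0 + (A+B) * t 1)"
  proof -
    have "jac_minor D A B t 0 3 = - (2 * D * t 3 * (2 * t 0 + (A+B) * t 1))" by (simp add: jac_minor_def jac_def algebra_simps)
    thus ?thesis using H[rule_format, of 0 3] by simp
  qed
  have M13: "p^(4*l+1) dvd 2 * D * t 3 * ((A+B) * t 0 + 2*A*B * t 1)"
  proof -
    have "jac_minor D A B t 1 3 = - (2 * D * t 3 * ((A+B) * t 0 + 2*A*B * t 1))" by (simp add: jac_minor_def jac_def algebra_simps)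
    thus ?thesis using H[rule_format, of 1 3] by simp
  qed
  have Gc: "G A B = c^2 - 4*A*B" by (simp add: G_def c_def power2_eq_square algebra_simps)
  have T2: "p^(4*l+1) dvd t 2 * G A B * (2 * t j)" if j: "j = 0 \<or> j = 1" for j
  proof -
    have e: "t 2 * G A B * (2 * t 0) = -(2*A*B) * (2 * t 2 * (2 * t 0 + c * t 1)) + c * (2 * t 2 * (c * t 0 + 2*A*B * t 1))"
      unfolding Gc power2_eq_square by algebra
    hence a0: "p^(4*l+1) dvd t 2 * G A B * (2 * t 0)" unfolding e
      by (intro dvd_add dvd_mult M02 M12)
    have e: "t 2 * G A B * (2 * t 1) = c * (2 * t 2 * (2 * t 0 + c * t 1)) - 2 * (2 * t 2 * (c * t 0 + 2*A*B * t 1))"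
      unfolding Gc power2_eq_square by algebra
    hence a1: "p^(4*l+1) dvd t 2 * G A B * (2 * t 1)" unfolding e
      by (intro dvd_diff dvd_mult M02 M12)
    show ?thesis using j a0 a1 by auto
  qed
  have T3: "p^(4*l+1) dvd t 3 * (A - B) * (A - B) * (2 * t j) * D" if j: "j = 0 \<or> j = 1" for j
  proof -
    have e: "t 3 * (A - B) * (A - B) * (2 * t 0) * D = (A+B) * (2 * D * t 3 * ((A+B) * t 0 + 2*A*B * t 1)) - 2*A*B * (2 * D * t 3 * (2 * t 0 + (A+B) * t 1))"
      unfolding power2_eq_square by algebra
    hence a0: "p^(4*l+1) dvd t 3 * (A - B) * (A - B) * (2 * t 0) * D" unfolding e
      by (intro dvd_diff dvd_mult M03 M13)
    have e: "t 3 * (A - B) * (A - B) * (2 * t 1) * D = (A+B) * (2 * D * t 3 * (2 * t 0 + (A+B) * t 1)) - 2 * (2 * D * t 3 * ((A+B) * t 0 + 2*A*B * t 1))"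
      unfolding power2_eq_square by algebra
    hence a1: "p^(4*l+1) dvd t 3 * (A - B) * (A - B) * (2 * t 1) * D" unfolding e
      by (intro dvd_diff dvd_mult M03 M13)
    show ?thesis using j a0 a1 by auto
  qed
  obtain j where j: "j = 0 \<or> j = 1" and tj: "\<not> p dvd t j" using unit01 by blast
  have n2tj: "\<not> p dvd 2 * t j" using tj p2 pr by (simp add: prime_dvd_mult_iff)
  have "p^(4*l+1) dvd t 2 * G A B" using L2[OF pr T2[OF j] n2tj] .
  moreover have "p^((3*l+1)+l) = p^(4*l+1)" by (rule arg_cong[where f="\<lambda>n. p^n"]) simp
  ultimately have "p^((3*l+1)+l) dvd t 2 * G A B" by (simp only:)
  hence d2: "p^(3*l+1) dvd t 2" using L1[OF pr _ assms(10)] by blast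
  have nD: "\<not> p^(1+1) dvd D" using assms(5) by (simp only: one_add_one not_False_eq_True)
  have "p^(4*l) dvd t 3 * (A - B) * (A - B) * (2 * t j)" using L1[OF pr T3[OF j] nD] .
  hence "p^(4*l) dvd (t 3 * (A - B)) * (A - B)" using L2[OF pr _ n2tj] by (simp only: mult.assoc)
  moreover have "p^(3*l+l) = p^(4*l)" by (rule arg_cong[where f="\<lambda>n. p^n"]) simp
  ultimately have "p^(3*l+l) dvd (t 3 * (A - B)) * (A - B)" by (simp only:)
  hence "p^(3*l) dvd t 3 * (A - B)" using L1[OF pr _ assms(9)] by blast
  moreover have "p^(2*l+l) = p^(3*l)" by (rule arg_cong[where f="\<lambda>n. p^n"]) simp
  ultimately have "p^(2*l+l) dvd t 3 * (A - B)" by (simp only:)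
  hence d3: "p^(2*l) dvd t 3" using L1[OF pr _ assms(9)] by blast
  have "(p^(2*l))^2 dvd t 3 ^ 2" using d3 by (rule dvd_power_same)
  hence "p^(4*l) dvd t 3 ^ 2" by (simp add: power_mult[symmetric] mult.commute)
  hence "p^(4*l) * p dvd t 3 ^ 2 * D" using assms(4) by (rule mult_dvd_mono)
  hence dD3: "p^(4*l+1) dvd D * t 3 ^ 2" by (simp add: mult.commute)
  have "(p^(3*l+1))^2 dvd t 2 ^ 2" using d2 by (rule dvd_power_same)
  moreover have "(p^(3*l+1))^2 = p^(6*l+2)" unfolding power_mult[symmetric]
    by (rule arg_cong[where f="\<lambda>n. p^n"]) simp
  ultimately have "p^(6*l+2) dvd t 2 ^ 2" by (simp only:)
  moreover have "p^(4*l+1) dvd p^(6*l+2)" by (rule le_imp_power_dvd) simp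
  ultimately have d22: "p^(4*l+1) dvd t 2 ^ 2" by (rule dvd_trans[rotated])
  have "p^(4*l+1) dvd p^(8*l+1)" by (rule le_imp_power_dvd) simp
  hence dQ1: "p^(4*l+1) dvd Q1 D t" using assms(12) by (rule dvd_trans)
  have "t 0 * t 1 = t 2 ^ 2 - D * t 3 ^ 2 - Q1 D t" by (simp add: Q1_def)
  hence d01: "p^(4*l+1) dvd t 1 * t 0" using d22 dD3 dQ1 by (simp add: dvd_diff mult.commute)
  show False
  proof (cases "p dvd t 0")
    case False
    have "p^(4*l+1) dvd t 1" using L2[OF pr d01 False] .
    hence pt1: "p dvd t 1" by (rule dvd_trans[rotated]) simp
    have "t 0 ^ 2 = t 2 ^ 2 - D * t 4 ^ 2 - Q2 D A B t - t 1 * (A * t 0 + B * t 0 + A * B * t 1)"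
      by (simp add: Q2_def algebra_simps power2_eq_square)
    moreover have "p dvd t 2" using d2 by (rule dvd_trans[rotated]) simp
    moreover have "p dvd t 2 ^ 2 - D * t 4 ^ 2 - Q2 D A B t - t 1 * (A * t 0 + B * t 0 + A * B * t 1)"
    proof -
      have "p dvd t 2 ^ 2" using \<open>p dvd t 2\<close> by (simp add: power2_eq_square)
      thus ?thesis by (intro dvd_diff dvd_mult2 assms(4) Q2p pt1)
    qed
    ultimately have "p dvd t 0 ^ 2" by simp
    hence "p dvd t 0" using pr by (simp add: prime_dvd_power_iff)
    thus False using False by simp
  next
    case True
    hence nt1: "\<not> p dvd t 1" using unit01 by blast
    have "p^(4*l+1) dvd t 0 * t 1" using d01 by (simp only: mult.commute)
    hence "p^(4*l+1) dvd t 0" using L2[OF pr _ nt1] by blast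
    hence "p^(4*l+1) dvd 2 * t 0 ^ 2" by (simp add: power2_eq_square)
    hence "p^(4*l+1) dvd (2*A*B*t 1^2 - 2*t 0^2) + 2 * t 0 ^ 2" using M01 by (rule dvd_add[rotated])
    hence "p^(4*l+1) dvd (A * B) * (2 * t 1 ^ 2)" by (simp add: algebra_simps)
    moreover have "\<not> p dvd 2 * t 1 ^ 2" using p2 nt1 pr by (simp add: prime_dvd_mult_iff prime_dvd_power_iff)
    ultimately have "p^(4*l+1) dvd A * B" using L2[OF pr] by blast
    moreover have "p^((3*l+1)+l) = p^(4*l+1)" by (rule arg_cong[where f="\<lambda>n. p^n"]) simp
    ultimately have "p^((3*l+1)+l) dvd A * B" by (simp only:)
    hence "p^(3*l+1) dvd A" using L1[OF pr _ assms(8)] by blast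
    moreover have "p^(l+1) dvd p^(3*l+1)" by (rule le_imp_power_dvd) simp
    ultimately show False using assms(7) by (meson dvd_trans)
  qed
qed

end
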